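(* Let $X=(\mathbb N,\tau_{cof})$ be the natural numbers with the co-finite topology (open sets: $\emptyset$ and complements of finite sets). Then $X$ is a $d$-space and is $s$-well-filtered, the closed Rudin sets of $X$ are exactly $\mathbb N$ and the singletons $\{n\}$, $n\in\mathbb N$, and $X$ is not well-filtered. In particular, an $s$-well-filtered space need not be well-filtered.
   Context: A $T_0$ space $X$ is a $d$-space if $X$ with the specialization order is a dcpo and every open set is Scott open. $Q(X)$ denotes the nonempty compact saturated subsets of $X$; a family of such sets is filtered if nonempty and any two members contain a third member. $X$ is well-filtered if for every open $U$ and filtered $\mathcal K\subseteq Q(X)$, $\bigcap\mathcal K\subseteq U$ implies $K\subseteq U$ for some $K\in\mathcal K$. A set $A$ is strongly compact if for every open $U\supseteq A$ there is a finite $F$ with $A\subseteq\uparrow F\subseteq U$; $Q_s(X)$ is the set of nonempty strongly compact saturated sets, and $X$ is $s$-well-filtered if the well-filtered condition holds for filtered $\mathcal K\subseteq Q_s(X)$. A Rudin set is a nonempty $A$ such that, for some filtered $\mathcal K\subseteq Q(X)$, $\overline A$ is a minimal closed set meeting every member of $\mathcal K$. *)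

theory Defs
  imports "HOL-Analysis.Analysis"
begin

definition cofinite_nat :: "nat topology" where
  "cofinite_nat = topology (\<lambda>U. U = {} \<or> finite (- U))"

lemma istopology_cofinite_nat: "istopology (\<lambda>U::nat set. U = {} \<or> finite (- U))"
  unfolding istopology_def
proof (intro conjI allI impI)
  fix S T :: "nat set"
  assume "S = {} \<or> finite (- S)" "T = {} \<or> finite (- T)"
  then show "S \<inter> T = {} \<or> finite (- (S \<inter> T))" by auto
next
  fix K :: "nat set set"
  assume K: "\<forall>S\<in>K. S = {} \<or> finite (- S)"
  show "\<Union>K = {} \<or> finite (- \<Union>K)"
  proof (cases "\<exists>S\<in>K. S \<noteq> {}")
    case True
    then obtain S where "S \<in> K" "S \<noteq> {}" by blast
    with K have "finite (- S)" by blast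
    moreover have "- \<Union>K \<subseteq> - S" using \<open>S \<in> K\<close> by blast
    ultimately show ?thesis using finite_subset by blast
  qed auto
qed

lemma openin_cofinite_nat: "openin cofinite_nat U \<longleftrightarrow> U = {} \<or> finite (- U)"
  unfolding cofinite_nat_def using istopology_cofinite_nat
  by (simp add: topology_inverse')

definition spec_le :: "'a topology \<Rightarrow> 'a \<Rightarrow> 'a \<Rightarrow> bool" where
  "spec_le X x y \<longleftrightarrow> x \<in> topspace X \<and> y \<in> topspace X \<and> x \<in> X closure_of {y}"

definition upper_set :: "'a topology \<Rightarrow> 'a set \<Rightarrow> bool" where
  "upper_set X A \<longleftrightarrow> A \<subseteq> topspace X \<and> (\<forall>x\<in>A. \<forall>y. spec_le X x y \<longrightarrow> y \<in> A)"

text \<open>Saturated sets = upper sets w.r.t. the specialization order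
  (equivalently, intersections of open sets).\<close>

definition saturated :: "'a topology \<Rightarrow> 'a set \<Rightarrow> bool" where
  "saturated X A \<longleftrightarrow> upper_set X A"

definition up_set :: "'a topology \<Rightarrow> 'a set \<Rightarrow> 'a set" where
  "up_set X F = {y. \<exists>x\<in>F. spec_le X x y}"

definition spec_directed :: "'a topology \<Rightarrow> 'a set \<Rightarrow> bool" where
  "spec_directed X D \<longleftrightarrow> D \<noteq> {} \<and> D \<subseteq> topspace X \<and>
     (\<forall>x\<in>D. \<forall>y\<in>D. \<exists>z\<in>D. spec_le X x z \<and> spec_le X y z)"

definition spec_is_sup :: "'a topology \<Rightarrow> 'a set \<Rightarrow> 'a \<Rightarrow> bool" where
  "spec_is_sup X D s \<longleftrightarrow> s \<in> topspace X \<and> (\<forall>d\<in>D. spec_le X d s) \<and>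
     (\<forall>u\<in>topspace X. (\<forall>d\<in>D. spec_le X d u) \<longrightarrow> spec_le X s u)"

definition spec_dcpo :: "'a topology \<Rightarrow> bool" where
  "spec_dcpo X \<longleftrightarrow> (\<forall>D. spec_directed X D \<longrightarrow> (\<exists>s. spec_is_sup X D s))"

definition scott_open :: "'a topology \<Rightarrow> 'a set \<Rightarrow> bool" where
  "scott_open X U \<longleftrightarrow> upper_set X U \<and>
     (\<forall>D s. spec_directed X D \<longrightarrow> spec_is_sup X D s \<longrightarrow> s \<in> U \<longrightarrow> D \<inter> U \<noteq> {})"

definition d_space :: "'a topology \<Rightarrow> bool" where
  "d_space X \<longleftrightarrow> t0_space X \<and> spec_dcpo X \<and> (\<forall>U. openin X U \<longrightarrow> scott_open X U)"

definition Qsets :: "'a topology \<Rightarrow> 'a set set" where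
  "Qsets X = {K. K \<noteq> {} \<and> compactin X K \<and> saturated X K}"

definition strongly_compact :: "'a topology \<Rightarrow> 'a set \<Rightarrow> bool" where
  "strongly_compact X A \<longleftrightarrow> A \<subseteq> topspace X \<and>
     (\<forall>U. openin X U \<longrightarrow> A \<subseteq> U \<longrightarrow>
        (\<exists>F. finite F \<and> F \<subseteq> topspace X \<and> A \<subseteq> up_set X F \<and> up_set X F \<subseteq> U))"

definition Qs_sets :: "'a topology \<Rightarrow> 'a set set" where
  "Qs_sets X = {K. K \<noteq> {} \<and> strongly_compact X K \<and> saturated X K}"

definition filtered_family :: "'a set set \<Rightarrow> bool" where
  "filtered_family \<K> \<longleftrightarrow> \<K> \<noteq> {} \<and> (\<forall>K1\<in>\<K>. \<forall>K2\<in>\<K>. \<exists>K3\<in>\<K>. K3 \<subseteq> K1 \<inter> K2)"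

definition well_filtered :: "'a topology \<Rightarrow> bool" where
  "well_filtered X \<longleftrightarrow> (\<forall>U \<K>. openin X U \<longrightarrow> \<K> \<subseteq> Qsets X \<longrightarrow> filtered_family \<K> \<longrightarrow>
      \<Inter>\<K> \<subseteq> U \<longrightarrow> (\<exists>K\<in>\<K>. K \<subseteq> U))"

definition s_well_filtered :: "'a topology \<Rightarrow> bool" where
  "s_well_filtered X \<longleftrightarrow> (\<forall>U \<K>. openin X U \<longrightarrow> \<K> \<subseteq> Qs_sets X \<longrightarrow> filtered_family \<K> \<longrightarrow>
      \<Inter>\<K> \<subseteq> U \<longrightarrow> (\<exists>K\<in>\<K>. K \<subseteq> U))"

definition minimal_closed_meeting :: "'a topology \<Rightarrow> 'a set set \<Rightarrow> 'a set \<Rightarrow> bool" where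
  "minimal_closed_meeting X \<K> C \<longleftrightarrow> closedin X C \<and> (\<forall>K\<in>\<K>. C \<inter> K \<noteq> {}) \<and>
     (\<forall>C'. closedin X C' \<longrightarrow> C' \<subseteq> C \<longrightarrow> (\<forall>K\<in>\<K>. C' \<inter> K \<noteq> {}) \<longrightarrow> C' = C)"

definition rudin_set :: "'a topology \<Rightarrow> 'a set \<Rightarrow> bool" where
  "rudin_set X A \<longleftrightarrow> A \<noteq> {} \<and> A \<subseteq> topspace X \<and>
     (\<exists>\<K>. \<K> \<subseteq> Qsets X \<and> filtered_family \<K> \<and> minimal_closed_meeting X \<K> (X closure_of A))"

end

theory Submission
  imports Defs
begin

lemma top_cof: "topspace cofinite_nat = UNIV"
  by (metis openin_cofinite_nat openin_subset Compl_UNIV_eq finite.emptyI top.extremum_unique)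

lemma closed_cof: "closedin cofinite_nat A \<longleftrightarrow> A = UNIV \<or> finite A"
  by (auto simp: closedin_def top_cof openin_cofinite_nat Compl_eq_Diff_UNIV[symmetric])

lemma closure_single: "cofinite_nat closure_of {y} = {y}"
  by (simp add: closure_of_closedin closed_cof)

lemma spec_cof: "spec_le cofinite_nat x y \<longleftrightarrow> x = y"
  by (simp add: spec_le_def top_cof closure_single)

lemma up_cof: "up_set cofinite_nat F = F"
  by (simp add: up_set_def spec_cof)

lemma sat_cof: "saturated cofinite_nat A"
  by (simp add: saturated_def upper_set_def spec_cof top_cof)

lemma compact_cof: "compactin cofinite_nat S"
  unfolding compactin_def top_cof
proof (intro conjI allI impI)
  fix \<U> assume h: "(\<forall>X\<in>\<U>. openin cofinite_nat X) \<and> S \<subseteq> \<Union>\<U>"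
  show "\<exists>\<F>. finite \<F> \<and> \<F> \<subseteq> \<U> \<and> S \<subseteq> \<Union>\<F>"
  proof (cases "S = {}")
    case True then show ?thesis by auto
  next
    case False
    then obtain s where "s \<in> S" by auto
    with h obtain U0 where U0: "U0 \<in> \<U>" "s \<in> U0" by auto
    with h have fin: "finite (- U0)" by (auto simp: openin_cofinite_nat)
    have "\<forall>x\<in>S - U0. \<exists>V\<in>\<U>. x \<in> V" using h by auto
    then obtain f where f: "\<forall>x\<in>S - U0. f x \<in> \<U> \<and> x \<in> f x" by metis
    have "finite (S - U0)" using fin by (rule finite_subset[rotated]) auto
    then show ?thesis using f U0
      by (intro exI[of _ "insert U0 (f ` (S - U0))"]) auto
  qed
qed simp

lemma sc_cof: "strongly_compact cofinite_nat A \<longleftrightarrow> finite A"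
proof
  assume "strongly_compact cofinite_nat A"
  then obtain F where "finite F" "A \<subseteq> F"
    unfolding strongly_compact_def up_cof
    using openin_cofinite_nat[of UNIV] by auto
  then show "finite A" using finite_subset by auto
next
  assume "finite A" then show "strongly_compact cofinite_nat A"
    unfolding strongly_compact_def up_cof top_cof by auto
qed

lemma dspace: "d_space cofinite_nat"
proof -
  have t0: "t0_space cofinite_nat"
    by (rule t1_imp_t0_space) (simp add: t1_space_closedin_singleton closed_cof)
  have dir: "spec_directed cofinite_nat D \<Longrightarrow> \<exists>d. D = {d}" for D
    unfolding spec_directed_def spec_cof by (metis ex_in_conv insertI1 subsetI singletonD subset_singleton_iff)
  have "spec_dcpo cofinite_nat"
    unfolding spec_dcpo_def
  proof (intro allI impI)
    fix D assume "spec_directed cofinite_nat D"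
    then obtain d where "D = {d}" using dir by blast
    then show "\<exists>s. spec_is_sup cofinite_nat D s"
      by (intro exI[of _ d]) (simp add: spec_is_sup_def spec_cof top_cof)
  qed
  moreover have "scott_open cofinite_nat U" for U
    unfolding scott_open_def
  proof (intro conjI allI impI)
    show "upper_set cofinite_nat U" using sat_cof saturated_def by metis
    fix D s assume "spec_directed cofinite_nat D" "spec_is_sup cofinite_nat D s" "s \<in> U"
    then show "D \<inter> U \<noteq> {}" using dir[of D] by (auto simp: spec_is_sup_def spec_cof)
  qed
  ultimately show ?thesis using t0 by (simp add: d_space_def)
qed

lemma swf: "s_well_filtered cofinite_nat"
  unfolding s_well_filtered_def
proof (intro allI impI)
  fix U \<K> assume o: "openin cofinite_nat U" and sub: "\<K> \<subseteq> Qs_sets cofinite_nat"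
    and fil: "filtered_family \<K>" and int: "\<Inter>\<K> \<subseteq> U"
  have Kfin: "K \<in> \<K> \<Longrightarrow> finite K \<and> K \<noteq> {}" for K
    proof -
    assume "K \<in> \<K>"
    then have "K \<in> Qs_sets cofinite_nat" using sub by blast
    then show ?thesis by (simp add: Qs_sets_def sc_cof)
  qed
  have "\<K> \<noteq> {}" using fil filtered_family_def by auto
  then obtain K1 where "K1 \<in> \<K>" by auto
  obtain K0 where K0: "K0 \<in> \<K>" "\<forall>K\<in>\<K>. card K0 \<le> card K"
  proof -
    from ex_has_least_nat[of "\<lambda>K. K \<in> \<K>" K1 card, OF \<open>K1 \<in> \<K>\<close>]
    obtain x where "x \<in> \<K>" "\<forall>y. y \<in> \<K> \<longrightarrow> card x \<le> card y" by blast
    then show ?thesis using that by blast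
  qed
  have "K0 \<subseteq> K" if "K \<in> \<K>" for K
  proof -
    have ff: "\<forall>K1\<in>\<K>. \<forall>K2\<in>\<K>. \<exists>K3\<in>\<K>. K3 \<subseteq> K1 \<inter> K2"
      using fil by (simp add: filtered_family_def)
    have "\<exists>K3\<in>\<K>. K3 \<subseteq> K0 \<inter> K" using bspec[OF bspec[OF ff K0(1)] that] .
    then obtain K3 where K3: "K3 \<in> \<K>" "K3 \<subseteq> K0 \<inter> K" by blast
    have "card K0 \<le> card K3" using bspec[OF K0(2) K3(1)] .
    moreover have "K3 \<subseteq> K0" using K3(2) by blast
    moreover have "finite K0" using Kfin[OF K0(1)] by blast
    ultimately have "K3 = K0" using card_seteq[of K0 K3] by simp
    then show ?thesis using K3 by auto
  qed
  then have "K0 \<subseteq> U" using int by blast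
  then show "\<exists>K\<in>\<K>. K \<subseteq> U" using K0 by blast
qed

lemma Q_cof: "Qsets cofinite_nat = {K. K \<noteq> {}}"
  by (auto simp: Qsets_def compact_cof sat_cof)

lemma tails: "filtered_family (range (\<lambda>n::nat. {n..}))"
  unfolding filtered_family_def
proof (intro conjI ballI)
  fix K1 K2 assume "K1 \<in> range (\<lambda>n::nat. {n..})" "K2 \<in> range (\<lambda>n::nat. {n..})"
  then obtain a b where "K1 = {a..}" "K2 = {b..}" by auto
  then show "\<exists>K3\<in>range (\<lambda>n::nat. {n..}). K3 \<subseteq> K1 \<inter> K2"
    by (intro bexI[of _ "{max a b..}"]) auto
qed simp

lemma tails_int: "\<Inter>(range (\<lambda>n::nat. {n..})) = {}"
proof -
  have "x \<notin> \<Inter>(range (\<lambda>n::nat. {n..}))" for x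
  proof
    assume "x \<in> \<Inter>(range (\<lambda>n::nat. {n..}))"
    then have "x \<in> {Suc x..}" by blast
    then show False by simp
  qed
  then show ?thesis by blast
qed

lemma nwf: "\<not> well_filtered cofinite_nat"
proof
  assume "well_filtered cofinite_nat"
  then have "\<exists>K\<in>range (\<lambda>n::nat. {n..}). K \<subseteq> {}"
  proof -
    have "openin cofinite_nat {}" by simp
    moreover have "range (\<lambda>n::nat. {n..}) \<subseteq> Qsets cofinite_nat" unfolding Q_cof by auto
    moreover have "\<Inter>(range (\<lambda>n::nat. {n..})) \<subseteq> {}" using tails_int by simp
    ultimately show ?thesis using \<open>well_filtered cofinite_nat\<close> tails
      unfolding well_filtered_def by (metis (no_types, lifting))
  qed
  then show False by auto
qed

lemma rudin: "{A. closedin cofinite_nat A \<and> rudin_set cofinite_nat A} = insert UNIV {{n} | n. True}"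
proof (intro equalityI subsetI)
  fix A :: "nat set" assume "A \<in> {A. closedin cofinite_nat A \<and> rudin_set cofinite_nat A}"
  then have c: "closedin cofinite_nat A" and r: "rudin_set cofinite_nat A" by auto
  then obtain \<K> where sub: "\<K> \<subseteq> Qsets cofinite_nat" and fil: "filtered_family \<K>"
    and m: "minimal_closed_meeting cofinite_nat \<K> A" and ne: "A \<noteq> {}"
    unfolding rudin_set_def by (auto simp: closure_of_closedin)
  show "A \<in> insert UNIV {{n} | n. True}"
  proof (rule ccontr)
    assume nA: "A \<notin> insert UNIV {{n} | n. True}"
    then have fA: "finite A" using c closed_cof by auto
    obtain a where a: "a \<in> A" using ne by auto
    obtain b where b: "b \<in> A" "b \<noteq> a" using nA a by blast
    have "\<exists>K\<in>\<K>. K \<inter> A \<subseteq> {x}" if "x \<in> A" for x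
    proof (rule ccontr)
      assume "\<not> ?thesis"
      then have "\<forall>K\<in>\<K>. (A - {x}) \<inter> K \<noteq> {}" by auto
      moreover have "closedin cofinite_nat (A - {x})" using fA closed_cof by auto
      ultimately have "A - {x} = A" using m unfolding minimal_closed_meeting_def by blast
      then show False using that by auto
    qed
    then obtain K1 K2 where "K1 \<in> \<K>" "K1 \<inter> A \<subseteq> {a}" "K2 \<in> \<K>" "K2 \<inter> A \<subseteq> {b}"
      using a b by meson
    then obtain K3 where "K3 \<in> \<K>" "K3 \<subseteq> K1 \<inter> K2"
      using fil unfolding filtered_family_def by meson
    then have "K3 \<in> \<K>" "K3 \<inter> A = {}"
      using \<open>K1 \<inter> A \<subseteq> {a}\<close> \<open>K2 \<inter> A \<subseteq> {b}\<close> b(2) by blast+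
    then show False using m unfolding minimal_closed_meeting_def by blast
  qed
next
  fix A :: "nat set" assume "A \<in> insert UNIV {{n} | n. True}"
  then consider "A = UNIV" | n where "A = {n}" by auto
  then show "A \<in> {A. closedin cofinite_nat A \<and> rudin_set cofinite_nat A}"
  proof cases
    case 1
    have "minimal_closed_meeting cofinite_nat (range (\<lambda>n::nat. {n..})) UNIV"
      unfolding minimal_closed_meeting_def closed_cof
    proof (intro conjI allI impI ballI)
      fix C' :: "nat set" assume h: "C' = UNIV \<or> finite C'" "\<forall>K\<in>range (\<lambda>n. {n..}). C' \<inter> K \<noteq> {}"
      show "C' = UNIV"
      proof (rule ccontr)
        assume "C' \<noteq> UNIV"
        then have "finite C'" using h by auto
        then obtain n where "C' \<subseteq> {..<n}" using finite_nat_bounded by blast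
        then have "C' \<inter> {n..} = {}" by auto
        then show False using h by auto
      qed
    qed auto
    moreover have "range (\<lambda>n::nat. {n..}) \<subseteq> Qsets cofinite_nat" unfolding Q_cof by auto
    moreover have "cofinite_nat closure_of UNIV = UNIV" by (metis closure_of_topspace top_cof)
    ultimately have "rudin_set cofinite_nat UNIV" unfolding rudin_set_def top_cof using tails by auto
    moreover have "closedin cofinite_nat UNIV" by (simp add: closed_cof)
    ultimately show ?thesis using 1 by simp
  next
    case 2
    have "minimal_closed_meeting cofinite_nat {{n}} {n}"
      unfolding minimal_closed_meeting_def closed_cof by auto
    moreover have "filtered_family {{n}}" by (simp add: filtered_family_def)
    moreover have "{{n}} \<subseteq> Qsets cofinite_nat" unfolding Q_cof by auto
    moreover have "cofinite_nat closure_of {n} = {n}" by (rule closure_single)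
    ultimately have "rudin_set cofinite_nat {n}" unfolding rudin_set_def top_cof by auto
    moreover have "closedin cofinite_nat {n}" by (simp add: closed_cof)
    ultimately show ?thesis using 2 by simp
  qed
qed

theorem mainTheorem2:
  shows "d_space cofinite_nat \<and> s_well_filtered cofinite_nat \<and>
         {A. closedin cofinite_nat A \<and> rudin_set cofinite_nat A} = insert UNIV {{n} | n. True} \<and>
         \<not> well_filtered cofinite_nat"
  using dspace swf rudin nwf by (intro conjI)

end
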